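(* Let $\phi$ be a Bernstein function with $\phi(0+)=0$ such that for some $\delta_0\in(0,1]$ and $c>0$, $c(R/r)^{\delta_0}\le\phi(R)/\phi(r)$ for all $0<r<R<\infty$. For $t,\lambda>0$ let $$g_t(\lambda)=\int_0^\infty\big(e^{-t\phi(\lambda r^2)}-e^{-t\phi(2\lambda r^2)}\big)e^{-r^2/4}r^{d-1}\,dr.$$ Then there is $N=N(c,\delta_0,d)$ such that $g_t(v^{-1})\le N\,t\,\phi(v^{-1})$ for all $t,v>0$. *)

theory Defs
  imports "HOL-Analysis.Analysis"
begin

definition bernstein :: "(real \<Rightarrow> real) \<Rightarrow> bool" where
  "bernstein \<phi> \<longleftrightarrow>
     (\<forall>x>0. \<phi> x \<ge> 0) \<and>
     (\<forall>n. \<forall>x>0. ((deriv ^^ n) \<phi> has_real_derivative (deriv ^^ Suc n) \<phi> x) (at x)) \<and>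
     (\<forall>n\<ge>1. \<forall>x>0. (-1) ^ (n - 1) * (deriv ^^ n) \<phi> x \<ge> 0)"

definition g_fun :: "nat \<Rightarrow> (real \<Rightarrow> real) \<Rightarrow> real \<Rightarrow> real \<Rightarrow> real" where
  "g_fun d \<phi> t lam =
     set_lebesgue_integral lborel {0<..}
       (\<lambda>r. (exp (- t * \<phi> (lam * r\<^sup>2)) - exp (- t * \<phi> (2 * lam * r\<^sup>2)))
               * exp (- (r\<^sup>2) / 4) * r ^ (d - 1))"

end

theory Submission
  imports Defs "HOL-Probability.Probability"
begin

lemma intG: "integrable lborel (\<lambda>x::real. exp (- (x\<^sup>2) / 4) * \<bar>x\<bar> ^ k)"
proof -
  have i: "integrable lborel (\<lambda>x. sqrt (2*pi*(sqrt 2)\<^sup>2) * (normal_density 0 (sqrt 2) x * \<bar>x - 0\<bar>^k))"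
    by (intro integrable_mult_right integrable_normal_moment_abs) simp
  have e: "(\<lambda>x. sqrt (2*pi*(sqrt 2)\<^sup>2) * (normal_density 0 (sqrt 2) x * \<bar>x - 0\<bar>^k)) = (\<lambda>x. exp (- (x\<^sup>2) / 4) * \<bar>x\<bar> ^ k)"
    by (rule ext) (simp add: normal_density_def)
  show ?thesis using i unfolding e .
qed

lemma sintG: "set_integrable lborel {0<..} (\<lambda>x::real. exp (- (x\<^sup>2) / 4) * \<bar>x\<bar> ^ k)"
  unfolding set_integrable_def
  by (rule integrable_mult_indicator[OF _ intG]) auto

lemma bD0: "bernstein \<phi> \<Longrightarrow> 0 < x \<Longrightarrow> (\<phi> has_real_derivative deriv \<phi> x) (at x)"
proof -
  assume b: "bernstein \<phi>" and x: "0 < x"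
  from b x have "((deriv ^^ 0) \<phi> has_real_derivative (deriv ^^ Suc 0) \<phi> x) (at x)"
    unfolding bernstein_def by blast
  then show ?thesis by simp
qed

lemma bD1: "bernstein \<phi> \<Longrightarrow> 0 < x \<Longrightarrow> (deriv \<phi> has_real_derivative deriv (deriv \<phi>) x) (at x)"
proof -
  assume b: "bernstein \<phi>" and x: "0 < x"
  from b x have "((deriv ^^ 1) \<phi> has_real_derivative (deriv ^^ Suc 1) \<phi> x) (at x)"
    unfolding bernstein_def by blast
  then show ?thesis by simp
qed

lemma bS1: "bernstein \<phi> \<Longrightarrow> 0 < x \<Longrightarrow> deriv \<phi> x \<ge> 0"
proof -
  assume b: "bernstein \<phi>" and x: "0 < x"
  from b have A: "\<forall>n\<ge>1. \<forall>x>0. (-1) ^ (n - 1) * (deriv ^^ n) \<phi> x \<ge> (0::real)"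
    unfolding bernstein_def by (elim conjE)
  have "(-1) ^ (1 - 1) * (deriv ^^ 1) \<phi> x \<ge> (0::real)"
    using spec[OF A, of 1] x by simp
  then show ?thesis by simp
qed

lemma bS2: "bernstein \<phi> \<Longrightarrow> 0 < x \<Longrightarrow> deriv (deriv \<phi>) x \<le> 0"
proof -
  assume b: "bernstein \<phi>" and x: "0 < x"
  from b have A: "\<forall>n\<ge>1. \<forall>x>0. (-1) ^ (n - 1) * (deriv ^^ n) \<phi> x \<ge> (0::real)"
    unfolding bernstein_def by (elim conjE)
  have "(-1) ^ (2 - 1) * (deriv ^^ 2) \<phi> x \<ge> (0::real)"
    using spec[OF A, of 2] x by simp
  moreover have "(deriv ^^ 2) \<phi> = deriv (deriv \<phi>)" by (simp add: numeral_2_eq_2)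
  ultimately show ?thesis by simp
qed

lemma bnn: "bernstein \<phi> \<Longrightarrow> 0 < x \<Longrightarrow> \<phi> x \<ge> 0"
  unfolding bernstein_def by blast

lemma bmono: assumes b: "bernstein \<phi>" and x: "0 < x" "x \<le> y" shows "\<phi> x \<le> \<phi> y"
proof (cases "x = y")
  case False
  then have "x < y" using x by simp
  from MVT2[OF this, of \<phi> "deriv \<phi>"] obtain z where z: "x < z" "z < y" "\<phi> y - \<phi> x = (y - x) * deriv \<phi> z"
    using bD0[OF b] x by fastforce
  have "deriv \<phi> z \<ge> 0" using bS1[OF b] z x by simp
  then have "(y - x) * deriv \<phi> z \<ge> 0" using \<open>x < y\<close> by (intro mult_nonneg_nonneg) auto
  then show ?thesis using z by linarith
qed simp

lemma bdmono: assumes b: "bernstein \<phi>" and x: "0 < x" "x \<le> y" shows "deriv \<phi> y \<le> deriv \<phi> x"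
proof (cases "x = y")
  case False
  then have "x < y" using x by simp
  from MVT2[OF this, of "deriv \<phi>" "deriv (deriv \<phi>)"] obtain z where
    z: "x < z" "z < y" "deriv \<phi> y - deriv \<phi> x = (y - x) * deriv (deriv \<phi>) z"
    using bD1[OF b] x by fastforce
  have "deriv (deriv \<phi>) z \<le> 0" using bS2[OF b] z x by simp
  then have "(y - x) * deriv (deriv \<phi>) z \<le> 0" using \<open>x < y\<close> by (intro mult_nonneg_nonpos) auto
  then show ?thesis using z by linarith
qed simp

lemma bxd: assumes b: "bernstein \<phi>" and x: "0 < x" shows "x * deriv \<phi> x \<le> \<phi> x"
proof (rule ccontr)
  assume "\<not> ?thesis"
  then have h: "\<phi> x < x * deriv \<phi> x" by simp
  have "0 < x * deriv \<phi> x" using h bnn[OF b x] by linarith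
  then have dpos: "deriv \<phi> x > 0" using x zero_less_mult_pos by blast
  define e where "e = (x * deriv \<phi> x - \<phi> x) / (2 * deriv \<phi> x)"
  have e0: "e > 0" using h dpos by (simp add: e_def)
  define a where "a = min (x/2) e"
  have a: "0 < a" "a < x" using x e0 by (auto simp: a_def)
  from MVT2[OF a(2), of \<phi> "deriv \<phi>"] obtain z where z: "a < z" "z < x" "\<phi> x - \<phi> a = (x - a) * deriv \<phi> z"
    using bD0[OF b] a by fastforce
  have "deriv \<phi> z \<ge> deriv \<phi> x" using bdmono[OF b, of z x] z a by simp
  then have "(x - a) * deriv \<phi> x \<le> (x - a) * deriv \<phi> z" using a by (intro mult_left_mono) auto
  then have "\<phi> x \<ge> \<phi> a + (x - a) * deriv \<phi> x" using z by linarith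
  moreover have "\<phi> a \<ge> 0" using bnn[OF b a(1)] .
  moreover have "a \<le> e" using a_def by simp
  moreover have "(x - e) * deriv \<phi> x \<le> (x - a) * deriv \<phi> x" using dpos \<open>a \<le> e\<close>
    by (intro mult_right_mono) auto
  moreover have "(x - e) * deriv \<phi> x = (x * deriv \<phi> x + \<phi> x) / 2"
    using dpos by (simp add: e_def field_simps)
  moreover have "(x * deriv \<phi> x + \<phi> x) / 2 > \<phi> x" using h by simp
  ultimately show False by linarith
qed

lemma bscale: assumes b: "bernstein \<phi>" and x: "0 < x" and s: "1 \<le> s" shows "\<phi> (s * x) \<le> s * \<phi> x"
proof (cases "s = 1")
  case False
  then have "x < s * x" using x s by simp
  from MVT2[OF this, of \<phi> "deriv \<phi>"] obtain z where z: "x < z" "z < s * x" "\<phi> (s*x) - \<phi> x = (s*x - x) * deriv \<phi> z"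
    using bD0[OF b] x by fastforce
  have "deriv \<phi> z \<le> deriv \<phi> x" using bdmono[OF b, of x z] z x by simp
  then have "(s*x - x) * deriv \<phi> z \<le> (s*x - x) * deriv \<phi> x" using \<open>x < s * x\<close> by (intro mult_left_mono) auto
  then have "\<phi> (s*x) \<le> \<phi> x + (s*x - x) * deriv \<phi> x" using z by linarith
  also have "(s*x - x) * deriv \<phi> x = (s - 1) * (x * deriv \<phi> x)" by (simp add: algebra_simps)
  also have "\<dots> \<le> (s - 1) * \<phi> x" using bxd[OF b x] s by (intro mult_left_mono) auto
  finally show ?thesis by (simp add: algebra_simps)
qed simp

lemma bgrow: assumes b: "bernstein \<phi>" and l: "0 < l" and y: "0 < y" shows "\<phi> y \<le> (1 + y / l) * \<phi> l"
proof (cases "y \<le> l")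
  case True
  have m: "\<phi> y \<le> \<phi> l" by (rule bmono[OF b y True])
  have q: "0 \<le> y / l" using y l by simp
  have "0 \<le> (y / l) * \<phi> l" by (rule mult_nonneg_nonneg[OF q bnn[OF b l]])
  then show ?thesis using m by (simp add: distrib_right)
next
  case False
  have s1: "1 \<le> y / l" using False l by simp
  have yl: "(y / l) * l = y" using l by simp
  have "\<phi> ((y/l) * l) \<le> (y/l) * \<phi> l" by (rule bscale[OF b l s1])
  then have "\<phi> y \<le> (y/l) * \<phi> l" by (simp only: yl)
  then show ?thesis using bnn[OF b l] by (simp add: distrib_right)
qed

lemma expdiff: assumes "0 \<le> (a::real)" "a \<le> b" shows "exp (-a) - exp (-b) \<le> b - a"
proof -
  have eq: "exp (-a) - exp (-b) = exp (-a) * (1 - exp (a - b))"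
    by (simp add: right_diff_distrib flip: exp_add)
  have "1 + (a - b) \<le> exp (a - b)" by (rule exp_ge_add_one_self)
  then have q: "1 - exp (a - b) \<le> b - a" by linarith
  have "exp (-a) \<le> 1" using assms by simp
  have "exp (-a) * (1 - exp (a - b)) \<le> 1 * (b - a)"
  proof (cases "1 - exp (a - b) \<ge> 0")
    case True
    then show ?thesis using q \<open>exp (-a) \<le> 1\<close> by (intro mult_mono) (auto simp: assms)
  next
    case False
    then have "exp (-a) * (1 - exp (a - b)) \<le> 0" by (intro mult_nonneg_nonpos) auto
    then show ?thesis using assms by simp
  qed
  then show ?thesis using eq by simp
qed

theorem lemma3p2:
  fixes c \<delta>0 :: real and d :: nat
  assumes "0 < \<delta>0" "\<delta>0 \<le> 1" "c > 0" "d \<ge> 1"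
  shows "\<exists>N. \<forall>\<phi>. bernstein \<phi> \<and> (\<phi> \<longlongrightarrow> 0) (at_right 0) \<and>
            (\<forall>r R. 0 < r \<and> r < R \<longrightarrow> c * (R / r) powr \<delta>0 \<le> \<phi> R / \<phi> r) \<longrightarrow>
            (\<forall>t>0. \<forall>v>0. g_fun d \<phi> t (1 / v) \<le> N * t * \<phi> (1 / v))"
proof -
  define H where "H = (\<lambda>r::real. exp (- (r\<^sup>2) / 4) * \<bar>r\<bar> ^ (d - 1) + 2 * (exp (- (r\<^sup>2) / 4) * \<bar>r\<bar> ^ (d + 1)))"
  have Hi: "set_integrable lborel {0<..} H"
    unfolding H_def by (intro set_integral_add sintG set_integrable_mult_right[OF sintG])
  have Hnn: "H r \<ge> 0" for r unfolding H_def by simp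
  define N where "N = (LINT r:{0<..}|lborel. H r)"
  have N0: "N \<ge> 0" unfolding N_def set_lebesgue_integral_def
    by (intro integral_nonneg_AE) (auto simp: Hnn indicator_def)
  show ?thesis
  proof (intro exI allI impI)
    fix \<phi> :: "real \<Rightarrow> real" and t v :: real
    assume "bernstein \<phi> \<and> (\<phi> \<longlongrightarrow> 0) (at_right 0) \<and>
            (\<forall>r R. 0 < r \<and> r < R \<longrightarrow> c * (R / r) powr \<delta>0 \<le> \<phi> R / \<phi> r)"
    then have b: "bernstein \<phi>" by blast
    assume t: "t > 0" and v: "v > 0"
    define l where "l = 1 / v"
    have l: "l > 0" using v by (simp add: l_def)
    define F where "F = (\<lambda>r. (exp (- t * \<phi> (l * r\<^sup>2)) - exp (- t * \<phi> (2 * l * r\<^sup>2)))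
               * exp (- (r\<^sup>2) / 4) * r ^ (d - 1))"
    have g: "g_fun d \<phi> t l = (LINT r:{0<..}|lborel. F r)"
      unfolding g_fun_def F_def ..
    have pt: "F r \<le> (t * \<phi> l) * H r" if r: "r \<in> {0<..}" for r
    proof -
      have r0: "r > 0" using r by simp
      have p1: "0 < l * r\<^sup>2" using l r0 by simp
      have p2: "0 < 2 * l * r\<^sup>2" using l r0 by simp
      have a0: "0 \<le> t * \<phi> (l * r\<^sup>2)" using bnn[OF b p1] t by simp
      have ab: "t * \<phi> (l * r\<^sup>2) \<le> t * \<phi> (2 * l * r\<^sup>2)"
        using bmono[OF b p1, of "2 * l * r\<^sup>2"] p1 t by (intro mult_left_mono) auto
      have "exp (- t * \<phi> (l * r\<^sup>2)) - exp (- t * \<phi> (2 * l * r\<^sup>2))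
            \<le> t * \<phi> (2 * l * r\<^sup>2) - t * \<phi> (l * r\<^sup>2)"
        using expdiff[OF a0 ab] by simp
      also have "\<dots> \<le> t * \<phi> (2 * l * r\<^sup>2)" using a0 by simp
      also have "\<dots> \<le> t * ((1 + 2 * l * r\<^sup>2 / l) * \<phi> l)"
        using bgrow[OF b l p2] t by (intro mult_left_mono) auto
      also have "\<dots> = t * \<phi> l * (1 + 2 * r\<^sup>2)" using l by (simp add: field_simps)
      finally have e: "exp (- t * \<phi> (l * r\<^sup>2)) - exp (- t * \<phi> (2 * l * r\<^sup>2)) \<le> t * \<phi> l * (1 + 2 * r\<^sup>2)" .
      have w: "exp (- (r\<^sup>2) / 4) * r ^ (d - 1) \<ge> 0" using r0 by simp
      have "F r \<le> t * \<phi> l * (1 + 2 * r\<^sup>2) * (exp (- (r\<^sup>2) / 4) * r ^ (d - 1))"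
        unfolding F_def using mult_right_mono[OF e w] by (simp add: mult.assoc)
      also have "\<dots> = (t * \<phi> l) * H r"
      proof -
        have "r\<^sup>2 * r ^ (d - 1) = r ^ (d + 1)" using assms(4)
        proof -
          have "r\<^sup>2 * r ^ (d - 1) = r ^ (2 + (d - 1))" by (simp add: power_add power2_eq_square)
          also have "2 + (d - 1) = d + 1" using assms(4) by simp
          finally show ?thesis .
        qed
        then show ?thesis unfolding H_def abs_of_pos[OF r0] by (simp only: flip: \<open>r\<^sup>2 * r ^ (d - 1) = r ^ (d + 1)\<close>) algebra
      qed
      finally show ?thesis .
    qed
    have "g_fun d \<phi> t l \<le> (t * \<phi> l) * N"
    proof (cases "set_integrable lborel {0<..} F")
      case True
      have "(LINT r:{0<..}|lborel. F r) \<le> (LINT r:{0<..}|lborel. (t * \<phi> l) * H r)"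
      proof (rule set_integral_mono[OF True])
        show "set_integrable lborel {0<..} (\<lambda>r. (t * \<phi> l) * H r)"
          using Hi by (rule set_integrable_mult_right)
      qed (rule pt)
      then show ?thesis using g N_def by simp
    next
      case False
      then have "(LINT r:{0<..}|lborel. F r) = 0"
        unfolding set_lebesgue_integral_def set_integrable_def by (rule not_integrable_integral_eq)
      then show ?thesis using g N0 t bnn[OF b l] by (simp add: mult_nonneg_nonneg)
    qed
    then show "g_fun d \<phi> t (1 / v) \<le> N * t * \<phi> (1 / v)" unfolding l_def by (simp add: algebra_simps)
  qed
qed

end
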